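(* Consider the coded caching model described in the context on a $\sqrt{n}\times\sqrt{n}$ grid (or torus) with $n$ servers, library size $K=O(n)$, and number of chunks per file $\ell=\Omega(\log n)$. For $1\le j\le K$ let $\tilde{p}_j \triangleq 1-(1-p_j)^{M\ell}$, and assume $\sqrt{\ell/\tilde{p}_j}=o(\sqrt{n})$ for every $j$. Then, with high probability, the communication cost of a request for file $W_j$ is $\Theta\big(\sqrt{\ell/\tilde{p}_j}\big)$, for every $1\le j\le K$. Moreover, $$\mathbb{E}[C]=\sum_{j=1}^K \Theta\Big(\sqrt{\ell/\tilde{p}_j}\Big)\,p_j .$$
   Context: Network: $n$ caching servers forming the nodes of a $\sqrt{n}\times\sqrt{n}$ grid graph $G$ (one may equivalently take the $\sqrt n\times\sqrt n$ torus to avoid boundary effects); $d_G(u,v)$ is the shortest-path distance and $B_r(u)=\{v: d_G(u,v)\le r\}$. Library: $K$ files $W_1,\dots,W_K$, each of $F$ bits, with popularity distribution $\mathcal{P}=(p_1,\dots,p_K)$. Each server has cache size $M$ (in units of files). Coded placement: each file is split into $\ell$ equal chunks $W_k^{(1)},\dots,W_k^{(\ell)}$ of $F/\ell$ bits; a coded chunk of $W_k$ is $\sum_{r=1}^{\ell}\alpha_r W_k^{(r)}$ with coefficients $\alpha_r$ i.i.d. uniform over a finite field $\mathbb{F}_q$ (fresh coefficients for each coded chunk). Each server independently fills its cache with $M\ell$ coded chunks, each obtained by sampling a file index $k$ from $\mathcal{P}$ independently and storing a fresh coded chunk of $W_k$. Thus $\tilde p_j$ is the probability that a given server stores at least one coded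 chunk of $W_j$. Requests: $n$ requests arrive; each request is placed at a server chosen uniformly at random and asks for file $W_j$ with probability $p_j$, independently. Coded delivery: a request for $W_j$ at server $u$ is served by the $\ell$ servers nearest to $u$ (in $d_G$, ties broken arbitrarily) that store a coded chunk of $W_j$; each of them sends one coded chunk (of $F/\ell$ bits) to $u$ along a shortest path. Communication cost: the communication cost of a single request is $\frac{1}{\ell}\sum d_G(l,u)$, the sum over the $\ell$ serving servers $l$; the overall communication cost $C$ is the average of this quantity over all $n$ requests, i.e. $C=\frac{1}{nF}\sum_{\text{requests}}\sum_{l} d_G(l,u)\cdot(\text{bits sent by } l)$. "With high probability" means with probability at least $1-1/n^c$ for some constant $c>0$, as $n\to\infty$. Asymptotic notation $O,\Omega,\Theta,o$ is with respect to $n\to\infty$. *)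

theory Defs
  imports "HOL-Probability.Probability" "HOL-Probability.Product_PMF" "HOL-Library.Landau_Symbols" "HOL-Library.Multiset"
begin

text \<open>Servers: the nodes of the s x s grid graph (n = s^2 servers).\<close>
definition grid :: "nat \<Rightarrow> (nat \<times> nat) set" where
  "grid s = {0..<s} \<times> {0..<s}"

text \<open>Shortest-path distance in the grid graph (Manhattan distance).\<close>
definition gdist :: "nat \<times> nat \<Rightarrow> nat \<times> nat \<Rightarrow> nat" where
  "gdist u v = (max (fst u) (fst v) - min (fst u) (fst v)) + (max (snd u) (snd v) - min (snd u) (snd v))"

text \<open>Number of coded chunks stored per cache, M * l (assumed to be a natural number).\<close>
definition nslots :: "real \<Rightarrow> nat \<Rightarrow> nat" where
  "nslots M l = nat \<lfloor>M * real l\<rfloor>"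

text \<open>A placement X assigns to every (server, slot) pair the index of the file of which a
  fresh coded chunk is stored in that slot.  Coding coefficients do not influence the cost.\<close>
definition stores :: "nat \<Rightarrow> ((nat \<times> nat) \<times> nat \<Rightarrow> nat) \<Rightarrow> nat \<times> nat \<Rightarrow> nat \<Rightarrow> bool" where
  "stores m X v j \<longleftrightarrow> (\<exists>i<m. X (v, i) = j)"

definition holders :: "nat \<Rightarrow> nat \<Rightarrow> ((nat \<times> nat) \<times> nat \<Rightarrow> nat) \<Rightarrow> nat \<Rightarrow> (nat \<times> nat) set" where
  "holders s m X j = {v \<in> grid s. stores m X v j}"

text \<open>Communication cost of a request for file j at server u: (1/l) times the sum of the
  distances of the l nearest servers storing a coded chunk of W_j (this sum does not depend on
  how ties are broken).  Convention (only relevant on a low-probability event): if fewer than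
  l servers store W_j, each missing chunk is charged the grid diameter 2(s-1).\<close>
definition req_cost :: "nat \<Rightarrow> nat \<Rightarrow> nat \<Rightarrow> ((nat \<times> nat) \<times> nat \<Rightarrow> nat) \<Rightarrow> nat \<times> nat \<Rightarrow> nat \<Rightarrow> real" where
  "req_cost s m l X u j =
     (let ds = sorted_list_of_multiset (image_mset (gdist u) (mset_set (holders s m X j)))
      in (real (sum_list (take l ds)) + real (l - length ds) * real (2 * (s - 1))) / real l)"

definition placement_pmf :: "nat \<Rightarrow> nat \<Rightarrow> nat pmf \<Rightarrow> ((nat \<times> nat) \<times> nat \<Rightarrow> nat) pmf" where
  "placement_pmf s m P = Pi_pmf (grid s \<times> {0..<m}) 0 (\<lambda>_. P)"

definition requests_pmf :: "nat \<Rightarrow> nat pmf \<Rightarrow> (nat \<Rightarrow> (nat \<times> nat) \<times> nat) pmf" where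
  "requests_pmf s P = Pi_pmf {0..<s^2} ((0, 0), 0) (\<lambda>_. pair_pmf (pmf_of_set (grid s)) P)"

definition overall_cost :: "nat \<Rightarrow> nat \<Rightarrow> nat \<Rightarrow> ((nat \<times> nat) \<times> nat \<Rightarrow> nat) \<Rightarrow> (nat \<Rightarrow> (nat \<times> nat) \<times> nat) \<Rightarrow> real" where
  "overall_cost s m l X R = (\<Sum>r<s^2. req_cost s m l X (fst (R r)) (snd (R r))) / real (s^2)"

definition ptilde :: "nat pmf \<Rightarrow> nat \<Rightarrow> nat \<Rightarrow> real" where
  "ptilde P m j = 1 - (1 - pmf P j) ^ m"

end

theory Submission
  imports Defs
begin

lemma sorted_take_le:
  fixes ds :: "nat list"
  assumes "sorted ds" "l \<le> length (filter (\<lambda>d. d \<le> t) ds)"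
  shows "\<forall>x\<in>set (take l ds). x \<le> t"
  using assms
proof (induction ds arbitrary: l)
  case Nil then show ?case by simp
next
  case (Cons a ds)
  show ?case
  proof (cases l)
    case 0 then show ?thesis by simp
  next
    case (Suc l')
    have srt: "sorted ds" and ge: "\<forall>x\<in>set ds. a \<le> x" using Cons.prems(1) by auto
    have "a \<le> t"
    proof (rule ccontr)
      assume na: "\<not> a \<le> t"
      have "\<forall>x\<in>set ds. \<not> x \<le> t" using ge na by (meson order_trans)
      then have "filter (\<lambda>d. d \<le> t) ds = []" by (simp add: filter_empty_conv)
      then have "filter (\<lambda>d. d \<le> t) (a # ds) = []" using na by simp
      then show False using Cons.prems(2) Suc by simp
    qed
    then have "l' \<le> length (filter (\<lambda>d. d \<le> t) ds)" using Cons.prems(2) Suc by simp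
    then have "\<forall>x\<in>set (take l' ds). x \<le> t"
      using Cons.IH srt by blast
    then show ?thesis using Suc \<open>a \<le> t\<close> by simp
  qed
qed

lemma sum_list_ge_filter:
  fixes xs :: "nat list"
  shows "(t + 1) * length (filter (\<lambda>d. \<not> d \<le> t) xs) \<le> sum_list xs"
  by (induction xs) auto

lemma length_filter_take_le: "length (filter Q (take l xs)) \<le> length (filter Q xs)"
proof -
  have "filter Q xs = filter Q (take l xs) @ filter Q (drop l xs)"
    by (metis append_take_drop_id filter_append)
  then show ?thesis by (metis le_add1 length_append)
qed

lemma sum_list_le_bound:
  fixes xs :: "nat list"
  assumes "\<forall>x\<in>set xs. x \<le> t"
  shows "sum_list xs \<le> length xs * t"
  using assms by (induction xs) auto

definition dlist :: "nat \<times> nat \<Rightarrow> (nat \<times> nat) set \<Rightarrow> nat list" where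
  "dlist u S = sorted_list_of_multiset (image_mset (gdist u) (mset_set S))"

lemma dlist_length: "finite S \<Longrightarrow> length (dlist u S) = card S"
  unfolding dlist_def by (metis size_image_mset size_mset size_mset_set mset_sorted_list_of_multiset)

lemma dlist_filter: "finite S \<Longrightarrow> length (filter Q (dlist u S)) = card {v\<in>S. Q (gdist u v)}"
proof -
  assume fS: "finite S"
  have "length (filter Q (dlist u S)) = size (filter_mset Q (mset (dlist u S)))"
    by (metis size_mset mset_filter)
  also have "\<dots> = size (filter_mset Q (image_mset (gdist u) (mset_set S)))"
    unfolding dlist_def by simp
  also have "\<dots> = size (image_mset (gdist u) (filter_mset (\<lambda>v. Q (gdist u v)) (mset_set S)))"
    by (simp add: filter_mset_image_mset)
  also have "\<dots> = card {v\<in>S. Q (gdist u v)}" using fS by simp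
  finally show ?thesis .
qed

lemma dlist_sorted: "sorted (dlist u S)"
  unfolding dlist_def by simp

lemma dlist_set: "finite S \<Longrightarrow> set (dlist u S) = gdist u ` S"
  unfolding dlist_def
  by (metis finite_set_mset_mset_set set_image_mset set_mset_mset mset_sorted_list_of_multiset)

definition cst :: "nat \<Rightarrow> nat \<Rightarrow> nat \<times> nat \<Rightarrow> (nat \<times> nat) set \<Rightarrow> real" where
  "cst s l u S = (real (sum_list (take l (dlist u S))) + real (l - length (dlist u S)) * real (2 * (s - 1))) / real l"

lemma req_cost_cst: "req_cost s m l X u j = cst s l u (holders s m X j)"
  unfolding req_cost_def cst_def dlist_def Let_def by simp

lemma cst_upper:
  assumes fS: "finite S" and l: "l \<ge> 1" and cnt: "l \<le> card {v\<in>S. gdist u v \<le> t}"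
  shows "cst s l u S \<le> real t"
proof -
  let ?ds = "dlist u S"
  have "card {v\<in>S. gdist u v \<le> t} \<le> card S" using fS by (intro card_mono) auto
  then have len: "length ?ds \<ge> l" using cnt dlist_length[OF fS, of u] by linarith
  have "length (filter (\<lambda>d. d \<le> t) ?ds) \<ge> l" using cnt dlist_filter[OF fS, of "\<lambda>d. d \<le> t" u] by simp
  then have "\<forall>x\<in>set (take l ?ds). x \<le> t" by (intro sorted_take_le dlist_sorted)
  then have "sum_list (take l ?ds) \<le> length (take l ?ds) * t" by (rule sum_list_le_bound)
  also have "\<dots> \<le> l * t" using len by simp
  finally have "real (sum_list (take l ?ds)) \<le> real l * real t" by (simp flip: of_nat_mult)
  moreover have "l - length ?ds = 0" using len by simp
  ultimately show ?thesis unfolding cst_def using l by (simp add: divide_le_eq mult.commute)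
qed

lemma cst_lower:
  assumes fS: "finite S" and l: "l \<ge> 1" and cnt: "2 * card {v\<in>S. gdist u v \<le> t} \<le> l"
    and tD: "t + 1 \<le> 2 * (s - 1)"
  shows "cst s l u S \<ge> real (t + 1) / 2"
proof -
  let ?ds = "dlist u S"
  define h where "h = card {v\<in>S. gdist u v \<le> t}"
  have hf: "length (filter (\<lambda>d. d \<le> t) ?ds) = h" unfolding h_def using dlist_filter[OF fS] by simp
  have a: "length (filter (\<lambda>d. d \<le> t) (take l ?ds)) \<le> h" using hf length_filter_take_le by metis
  have b: "length (filter (\<lambda>d. d \<le> t) (take l ?ds)) + length (filter (\<lambda>d. \<not> d \<le> t) (take l ?ds)) = length (take l ?ds)"
    by (rule sum_length_filter_compl)
  have c: "(t + 1) * length (filter (\<lambda>d. \<not> d \<le> t) (take l ?ds)) \<le> sum_list (take l ?ds)"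
    by (rule sum_list_ge_filter)
  have d: "length (take l ?ds) + (l - length ?ds) = l" by simp
  have "(t + 1) * (l - h) \<le> (t + 1) * (length (filter (\<lambda>d. \<not> d \<le> t) (take l ?ds)) + (l - length ?ds))"
    using a b d by (intro mult_left_mono) linarith+
  also have "\<dots> = (t + 1) * length (filter (\<lambda>d. \<not> d \<le> t) (take l ?ds)) + (t + 1) * (l - length ?ds)"
    by (simp add: algebra_simps)
  also have "\<dots> \<le> sum_list (take l ?ds) + (2 * (s - 1)) * (l - length ?ds)"
    using c tD by (intro add_mono mult_right_mono) auto
  finally have e: "real ((t + 1) * (l - h)) \<le> real (sum_list (take l ?ds)) + real (l - length ?ds) * real (2 * (s - 1))"
    by (metis of_nat_le_iff of_nat_add of_nat_mult mult.commute)
  have "real (t + 1) * real l / 2 \<le> real ((t + 1) * (l - h))"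
  proof -
    have "real l / 2 \<le> real (l - h)" using cnt h_def by linarith
    then have "real (t + 1) * (real l / 2) \<le> real (t + 1) * real (l - h)" by (intro mult_left_mono) auto
    moreover have "real ((t + 1) * (l - h)) = real (t + 1) * real (l - h)" by (rule of_nat_mult)
    ultimately show ?thesis by simp
  qed
  with e have "real (t + 1) * real l / 2 \<le> real (sum_list (take l ?ds)) + real (l - length ?ds) * real (2 * (s - 1))"
    by linarith
  then show ?thesis unfolding cst_def using l by (simp add: le_divide_eq mult.commute)
qed

lemma gdist_grid_le: "u \<in> grid s \<Longrightarrow> v \<in> grid s \<Longrightarrow> gdist u v \<le> 2 * (s - 1)"
  unfolding grid_def gdist_def by (cases u; cases v) auto

lemma cst_bounded:
  assumes fS: "finite S" and SG: "S \<subseteq> grid s" and u: "u \<in> grid s" and l: "l \<ge> 1"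
  shows "cst s l u S \<le> real (2 * (s - 1))" "0 \<le> cst s l u S"
proof -
  let ?ds = "dlist u S"
  have "\<forall>x\<in>set ?ds. x \<le> 2 * (s - 1)" proof
    fix x assume "x \<in> set ?ds"
    then obtain v where "v \<in> S" "x = gdist u v" using dlist_set[OF fS, of u] by auto
    then show "x \<le> 2 * (s - 1)" using SG u gdist_grid_le by blast
  qed
  then have "\<forall>x\<in>set (take l ?ds). x \<le> 2 * (s - 1)" by (meson in_set_takeD)
  then have "sum_list (take l ?ds) \<le> length (take l ?ds) * (2 * (s - 1))" by (rule sum_list_le_bound)
  moreover have "length (take l ?ds) + (l - length ?ds) = l" by simp
  ultimately have "sum_list (take l ?ds) + (l - length ?ds) * (2 * (s - 1)) \<le> l * (2 * (s - 1))"
    by (metis add_mult_distrib add_right_mono)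
  then have "real (sum_list (take l ?ds)) + real (l - length ?ds) * real (2 * (s - 1)) \<le> real l * real (2 * (s - 1))"
    by (metis of_nat_le_iff of_nat_add of_nat_mult)
  then show "cst s l u S \<le> real (2 * (s - 1))" unfolding cst_def using l by (simp add: divide_le_eq mult.commute)
  show "0 \<le> cst s l u S" unfolding cst_def by simp
qed

definition ball_g :: "nat \<Rightarrow> nat \<times> nat \<Rightarrow> nat \<Rightarrow> (nat \<times> nat) set" where
  "ball_g s u t = {v\<in>grid s. gdist u v \<le> t}"

lemma finite_grid[simp]: "finite (grid s)" unfolding grid_def by simp

lemma card_grid[simp]: "card (grid s) = s^2" unfolding grid_def by (simp add: card_cartesian_product power2_eq_square)

lemma ball_g_sub: "ball_g s u t \<subseteq> grid s" unfolding ball_g_def by auto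

lemma card_ball_upper: "card (ball_g s u t) \<le> (2 * t + 1)^2"
proof -
  obtain a b where u: "u = (a, b)" by (cases u)
  have "ball_g s u t \<subseteq> {a - t..a + t} \<times> {b - t..b + t}"
    unfolding ball_g_def gdist_def u by auto
  then have "card (ball_g s u t) \<le> card ({a - t..a + t} \<times> {b - t..b + t})"
    by (intro card_mono) auto
  also have "\<dots> = card {a - t..a + t} * card {b - t..b + t}" by (rule card_cartesian_product)
  also have "\<dots> \<le> (2 * t + 1) * (2 * t + 1)" by (intro mult_mono) auto
  finally show ?thesis by (simp add: power2_eq_square)
qed

definition ivl :: "nat \<Rightarrow> nat \<Rightarrow> nat \<Rightarrow> nat set" where
  "ivl s k a = (if a + k \<le> s - 1 then {a..a+k} else {s-1-k..s-1})"

lemma ivl_props: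
  assumes "a < s" "k \<le> s - 1"
  shows "ivl s k a \<subseteq> {0..<s}" "card (ivl s k a) = k + 1"
    "\<And>x. x \<in> ivl s k a \<Longrightarrow> max a x - min a x \<le> k"
  using assms unfolding ivl_def by (auto split: if_splits simp: max_def min_def)

lemma card_ball_lower:
  assumes u: "u \<in> grid s" and k: "k \<le> s - 1"
  shows "(k + 1)^2 \<le> card (ball_g s u (2 * k))"
proof -
  obtain a b where ab: "u = (a, b)" by (cases u)
  have a: "a < s" and b: "b < s" using u ab unfolding grid_def by auto
  have "ivl s k a \<times> ivl s k b \<subseteq> ball_g s u (2 * k)"
  proof
    fix v assume v: "v \<in> ivl s k a \<times> ivl s k b"
    obtain x y where xy: "v = (x, y)" by (cases v)
    have x: "x \<in> ivl s k a" and y: "y \<in> ivl s k b" using v xy by auto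
    have "x < s" "y < s" using ivl_props(1)[OF a k] ivl_props(1)[OF b k] x y by auto
    moreover have "max a x - min a x \<le> k" "max b y - min b y \<le> k"
      using ivl_props(3)[OF a k x] ivl_props(3)[OF b k y] by auto
    ultimately show "v \<in> ball_g s u (2 * k)"
      unfolding ball_g_def grid_def gdist_def xy ab by (auto simp: max_def min_def)
  qed
  then have "card (ivl s k a \<times> ivl s k b) \<le> card (ball_g s u (2 * k))"
    by (intro card_mono) (auto simp: ball_g_def)
  moreover have "card (ivl s k a \<times> ivl s k b) = (k + 1)^2"
    using ivl_props(2)[OF a k] ivl_props(2)[OF b k] by (simp add: card_cartesian_product power2_eq_square)
  ultimately show ?thesis by simp
qed

lemma Pi_pmf_nest:
  assumes fA: "finite A" and fB: "finite B"
  shows "Pi_pmf (A \<times> B) d (\<lambda>_. P) = map_pmf case_prod (Pi_pmf A (\<lambda>_. d) (\<lambda>_. Pi_pmf B d (\<lambda>_. P)))"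
proof (rule pmf_eqI)
  fix g :: "'a \<times> 'b \<Rightarrow> 'c"
  have inj: "inj (case_prod :: ('a \<Rightarrow> 'b \<Rightarrow> 'c) \<Rightarrow> _)"
    by (intro injI) (metis curry_case_prod)
  have g: "g = case_prod (curry g)" by simp
  have "pmf (map_pmf case_prod (Pi_pmf A (\<lambda>_. d) (\<lambda>_. Pi_pmf B d (\<lambda>_. P)))) g
        = pmf (Pi_pmf A (\<lambda>_. d) (\<lambda>_. Pi_pmf B d (\<lambda>_. P))) (curry g)"
    by (subst g, subst pmf_map_inj'[OF inj]) simp
  also have "\<dots> = pmf (Pi_pmf (A \<times> B) d (\<lambda>_. P)) g"
  proof (cases "\<forall>x. x \<notin> A \<times> B \<longrightarrow> g x = d")
    case True
    have "pmf (Pi_pmf A (\<lambda>_. d) (\<lambda>_. Pi_pmf B d (\<lambda>_. P))) (curry g)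
          = (\<Prod>a\<in>A. pmf (Pi_pmf B d (\<lambda>_. P)) (curry g a))"
      using True fA by (subst pmf_Pi) (auto simp: fun_eq_iff)
    also have "\<dots> = (\<Prod>a\<in>A. \<Prod>b\<in>B. pmf P (g (a, b)))"
      using True fB by (intro prod.cong refl, subst pmf_Pi) auto
    also have "\<dots> = (\<Prod>x\<in>A \<times> B. pmf P (g x))"
      by (simp add: prod.cartesian_product)
    also have "\<dots> = pmf (Pi_pmf (A \<times> B) d (\<lambda>_. P)) g"
      using True fA fB by (subst pmf_Pi) auto
    finally show ?thesis .
  next
    case False
    then obtain a b where ab: "(a, b) \<notin> A \<times> B" "g (a, b) \<noteq> d" by auto
    have r: "pmf (Pi_pmf (A \<times> B) d (\<lambda>_. P)) g = 0"
      using fA fB ab by (intro pmf_Pi_outside) auto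
    show ?thesis
    proof (cases "a \<in> A")
      case False
      then show ?thesis using r fA ab by (subst pmf_Pi_outside) (auto simp: fun_eq_iff intro!: exI[of _ a])
    next
      case True
      then have bB: "b \<notin> B" using ab by auto
      have "pmf (Pi_pmf B d (\<lambda>_. P)) (curry g a) = 0"
        using fB bB ab by (intro pmf_Pi_outside) auto
      then have "(\<Prod>a\<in>A. pmf (Pi_pmf B d (\<lambda>_. P)) (curry g a)) = 0"
        using True fA by (intro prod_zero) auto
      then show ?thesis using r fA by (subst pmf_Pi) auto
    qed
  qed
  finally show "pmf (Pi_pmf (A \<times> B) d (\<lambda>_. P)) g = pmf (map_pmf case_prod (Pi_pmf A (\<lambda>_. d) (\<lambda>_. Pi_pmf B d (\<lambda>_. P)))) g"
    by simp
qed

lemma ptilde_range: "0 \<le> ptilde P m j" "ptilde P m j \<le> 1"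
proof -
  have "0 \<le> 1 - pmf P j" "1 - pmf P j \<le> 1" using pmf_le_1[of P j] pmf_nonneg[of P j] by auto
  then have "0 \<le> (1 - pmf P j) ^ m" "(1 - pmf P j) ^ m \<le> 1" by (auto intro: power_le_one)
  then show "0 \<le> ptilde P m j" "ptilde P m j \<le> 1" unfolding ptilde_def by auto
qed

lemma pmf_bool_sum: "pmf (Q :: bool pmf) True + pmf Q False = 1"
proof -
  have "measure_pmf.prob Q UNIV = 1" by simp
  moreover have "measure_pmf.prob Q UNIV = sum (pmf Q) UNIV" by (rule measure_measure_pmf_finite) simp
  moreover have "sum (pmf Q) (UNIV::bool set) = pmf Q True + pmf Q False" by (simp add: UNIV_bool)
  ultimately show ?thesis by simp
qed

lemma slot_bernoulli:
  assumes j: "j \<noteq> 0"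
  shows "map_pmf (\<lambda>G. \<exists>i<m. G i = j) (Pi_pmf {0..<m} 0 (\<lambda>_. P)) = bernoulli_pmf (ptilde P m j)"
proof -
  let ?Q = "Pi_pmf {0..<m} (0::nat) (\<lambda>_. P)"
  have "measure_pmf.prob ?Q (Pi {0..<m} (\<lambda>_. - {j})) = (\<Prod>i\<in>{0..<m}. measure_pmf.prob P (- {j}))"
    by (rule measure_Pi_pmf_Pi) simp
  also have "measure_pmf.prob P (- {j}) = 1 - pmf P j"
  proof -
    have "measure_pmf.prob P (space (measure_pmf P) - {j}) = 1 - measure_pmf.prob P {j}"
      by (rule measure_pmf.prob_compl) simp
    then show ?thesis by (simp add: measure_pmf_single Compl_eq_Diff_UNIV)
  qed
  finally have A: "measure_pmf.prob ?Q (Pi {0..<m} (\<lambda>_. - {j})) = (1 - pmf P j) ^ m" by simp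
  have set_eq: "(\<lambda>G. \<exists>i<m. G i = j) -` {False} = Pi {0..<m} (\<lambda>_. - {j})"
    by (auto simp: Pi_def)
  have F: "pmf (map_pmf (\<lambda>G. \<exists>i<m. G i = j) ?Q) False = 1 - ptilde P m j"
  proof -
    have "pmf (map_pmf (\<lambda>G. \<exists>i<m. G i = j) ?Q) False = measure_pmf.prob ?Q ((\<lambda>G. \<exists>i<m. G i = j) -` {False})"
      by (rule pmf_map)
    also have "\<dots> = (1 - pmf P j) ^ m" unfolding set_eq by (rule A)
    finally show ?thesis unfolding ptilde_def by simp
  qed
  have T: "pmf (map_pmf (\<lambda>G. \<exists>i<m. G i = j) ?Q) True = ptilde P m j"
  proof -
    have "pmf (map_pmf (\<lambda>G. \<exists>i<m. G i = j) ?Q) True = 1 - pmf (map_pmf (\<lambda>G. \<exists>i<m. G i = j) ?Q) False"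
      using pmf_bool_sum[of "map_pmf (\<lambda>G. \<exists>i<m. G i = j) ?Q"] by linarith
    then show ?thesis using F by simp
  qed
  show ?thesis
  proof (rule pmf_eqI)
    fix b :: bool show "pmf (map_pmf (\<lambda>G. \<exists>i<m. G i = j) ?Q) b = pmf (bernoulli_pmf (ptilde P m j)) b"
      using T F ptilde_range[of P m j] by (cases b) auto
  qed
qed

lemma holders_dist:
  assumes fA: "finite A" and j: "j \<noteq> 0"
  shows "map_pmf (\<lambda>X v. stores m X v j) (Pi_pmf (A \<times> {0..<m}) 0 (\<lambda>_. P))
         = Pi_pmf A False (\<lambda>_. bernoulli_pmf (ptilde P m j))"
proof -
  let ?Q = "Pi_pmf {0..<m} (0::nat) (\<lambda>_. P)"
  let ?f = "\<lambda>G. \<exists>i<m. G i = j"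
  have "map_pmf (\<lambda>X v. stores m X v j) (Pi_pmf (A \<times> {0..<m}) 0 (\<lambda>_. P))
        = map_pmf (\<lambda>X v. stores m X v j) (map_pmf case_prod (Pi_pmf A (\<lambda>_. 0) (\<lambda>_. ?Q)))"
    using fA by (simp add: Pi_pmf_nest)
  also have "\<dots> = map_pmf (\<lambda>h. ?f \<circ> h) (Pi_pmf A (\<lambda>_. 0) (\<lambda>_. ?Q))"
  proof -
    have eq: "(\<lambda>X v. stores m X v j) \<circ> case_prod = (\<lambda>h. ?f \<circ> h)"
      by (auto simp: fun_eq_iff stores_def)
    show ?thesis unfolding pmf.map_comp eq ..
  qed
  also have "\<dots> = Pi_pmf A False (\<lambda>_. map_pmf ?f ?Q)"
    using fA j by (intro Pi_pmf_map[symmetric]) auto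
  also have "\<dots> = Pi_pmf A False (\<lambda>_. bernoulli_pmf (ptilde P m j))"
    using j by (simp add: slot_bernoulli)
  finally show ?thesis .
qed

lemma set_pmf_Pi_bern_finite:
  assumes "finite A"
  shows "finite (set_pmf (Pi_pmf A False (\<lambda>_. bernoulli_pmf q)))"
proof -
  have "set_pmf (Pi_pmf A False (\<lambda>_. bernoulli_pmf q)) \<subseteq> PiE_dflt A False (set_pmf \<circ> (\<lambda>_. bernoulli_pmf q))"
    by (rule set_Pi_pmf_subset'[OF assms])
  moreover have "finite (PiE_dflt A False (set_pmf \<circ> (\<lambda>_. bernoulli_pmf q)))"
    using assms by (intro finite_PiE_dflt) auto
  ultimately show ?thesis by (rule finite_subset)
qed

lemma exp_bern: "0 \<le> q \<Longrightarrow> q \<le> 1 \<Longrightarrow>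
  measure_pmf.expectation (bernoulli_pmf q) (\<lambda>x. if x then c else 1) = 1 - q + q * c"
  by (subst integral_measure_pmf_real[where A=UNIV]) (auto simp: UNIV_bool)

lemma exp_prod_bern:
  assumes fA: "finite A" and BA: "B \<subseteq> A" and q: "0 \<le> q" "q \<le> 1" and c: "0 \<le> c"
  shows "measure_pmf.expectation (Pi_pmf A False (\<lambda>_. bernoulli_pmf q)) (\<lambda>b. \<Prod>v\<in>B. if b v then c else 1)
         = (1 - q + q * c) ^ card B"
proof -
  define f where "f = (\<lambda>v (x::bool). if v \<in> B then (if x then c else (1::real)) else 1)"
  have fB: "finite B" using fA BA finite_subset by blast
  have eq: "(\<Prod>v\<in>B. if b v then c else 1) = (\<Prod>v\<in>A. f v (b v))" for b :: "'a \<Rightarrow> bool"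
  proof -
    have "(\<Prod>v\<in>A. f v (b v)) = (\<Prod>v\<in>{v\<in>A. v \<in> B}. if b v then c else 1)"
      unfolding f_def using fA by (subst prod.inter_filter) auto
    also have "{v\<in>A. v \<in> B} = B" using BA by auto
    finally show ?thesis by simp
  qed
  have "measure_pmf.expectation (Pi_pmf A False (\<lambda>_. bernoulli_pmf q)) (\<lambda>b. \<Prod>v\<in>B. if b v then c else 1)
      = measure_pmf.expectation (Pi_pmf A False (\<lambda>_. bernoulli_pmf q)) (\<lambda>b. \<Prod>v\<in>A. f v (b v))"
    by (simp only: eq)
  also have "\<dots> = (\<Prod>v\<in>A. measure_pmf.expectation (bernoulli_pmf q) (f v))"
    by (intro expectation_prod_Pi_pmf fA integrable_measure_pmf_finite) (auto simp: f_def c)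
  also have "\<dots> = (\<Prod>v\<in>A. if v \<in> B then 1 - q + q * c else 1)"
    by (intro prod.cong refl) (auto simp: f_def exp_bern q)
  also have "\<dots> = (\<Prod>v\<in>{v\<in>A. v \<in> B}. 1 - q + q * c)"
    using fA by (subst prod.inter_filter) auto
  also have "{v\<in>A. v \<in> B} = B" using BA by auto
  finally show ?thesis by simp
qed

lemma exp_card_prod:
  assumes "finite B"
  shows "c ^ card {v\<in>B. b v} = (\<Prod>v\<in>B. if b v then c else (1::real))"
  using assms by (simp add: prod.inter_filter[symmetric])

lemma chernoff_upper:
  assumes fA: "finite A" and BA: "B \<subseteq> A" and q: "0 \<le> q" "q \<le> 1" and t: "t \<ge> 0"
  shows "measure_pmf.prob (Pi_pmf A False (\<lambda>_. bernoulli_pmf q)) {b. a \<le> real (card {v\<in>B. b v})}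
         \<le> exp (- t * a + real (card B) * q * (exp t - 1))"
proof -
  let ?M = "Pi_pmf A False (\<lambda>_. bernoulli_pmf q)"
  let ?H = "\<lambda>b. real (card {v\<in>B. b v})"
  have fB: "finite B" using fA BA finite_subset by blast
  have "measure_pmf.prob ?M {b. a \<le> ?H b} = measure_pmf.expectation ?M (indicator {b. a \<le> ?H b})"
    by simp
  also have "\<dots> \<le> measure_pmf.expectation ?M (\<lambda>b. exp (- t * a) * (\<Prod>v\<in>B. if b v then exp t else 1))"
  proof (intro integral_mono integrable_measure_pmf_finite set_pmf_Pi_bern_finite fA)
    fix b
    have "exp (- t * a) * (\<Prod>v\<in>B. if b v then exp t else 1) = exp (- t * a) * exp t ^ card {v\<in>B. b v}"
      using exp_card_prod[OF fB] by simp
    also have "\<dots> = exp (t * (?H b - a))"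
      by (simp add: exp_of_nat_mult[symmetric] exp_add[symmetric] algebra_simps)
    finally have e: "exp (- t * a) * (\<Prod>v\<in>B. if b v then exp t else 1) = exp (t * (?H b - a))" .
    show "indicator {b. a \<le> ?H b} b \<le> exp (- t * a) * (\<Prod>v\<in>B. if b v then exp t else 1)"
    proof (cases "a \<le> ?H b")
      case True
      then have "0 \<le> t * (?H b - a)" using t by simp
      then have "1 \<le> exp (t * (?H b - a))" by simp
      then show ?thesis using True e by simp
    next
      case False then show ?thesis using e by simp
    qed
  qed
  also have "\<dots> = exp (- t * a) * (1 - q + q * exp t) ^ card B"
    using exp_prod_bern[OF fA BA q, of "exp t"] by simp
  also have "\<dots> \<le> exp (- t * a) * exp (q * (exp t - 1)) ^ card B"
  proof -
    have "0 \<le> 1 - q + q * exp t" using q by (simp add: add_nonneg_nonneg)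
    moreover have "1 - q + q * exp t \<le> exp (q * (exp t - 1))"
      using exp_ge_add_one_self[of "q * (exp t - 1)"] by (simp add: algebra_simps)
    ultimately show ?thesis by (intro mult_left_mono power_mono) auto
  qed
  also have "\<dots> = exp (- t * a + real (card B) * q * (exp t - 1))"
    by (simp add: exp_of_nat_mult[symmetric] exp_add[symmetric] algebra_simps)
  finally show ?thesis .
qed

lemma chernoff_lower:
  assumes fA: "finite A" and BA: "B \<subseteq> A" and q: "0 \<le> q" "q \<le> 1" and t: "t \<ge> 0"
  shows "measure_pmf.prob (Pi_pmf A False (\<lambda>_. bernoulli_pmf q)) {b. real (card {v\<in>B. b v}) \<le> a}
         \<le> exp (t * a - real (card B) * q * (1 - exp (- t)))"
proof -
  let ?M = "Pi_pmf A False (\<lambda>_. bernoulli_pmf q)"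
  let ?H = "\<lambda>b. real (card {v\<in>B. b v})"
  have fB: "finite B" using fA BA finite_subset by blast
  have "measure_pmf.prob ?M {b. ?H b \<le> a} = measure_pmf.expectation ?M (indicator {b. ?H b \<le> a})"
    by simp
  also have "\<dots> \<le> measure_pmf.expectation ?M (\<lambda>b. exp (t * a) * (\<Prod>v\<in>B. if b v then exp (- t) else 1))"
  proof (intro integral_mono integrable_measure_pmf_finite set_pmf_Pi_bern_finite fA)
    fix b
    have "exp (t * a) * (\<Prod>v\<in>B. if b v then exp (- t) else 1) = exp (t * a) * exp (- t) ^ card {v\<in>B. b v}"
      using exp_card_prod[OF fB] by simp
    also have "\<dots> = exp (t * (a - ?H b))"
      by (simp add: exp_of_nat_mult[symmetric] exp_add[symmetric] algebra_simps)
    finally have e: "exp (t * a) * (\<Prod>v\<in>B. if b v then exp (- t) else 1) = exp (t * (a - ?H b))" .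
    show "indicator {b. ?H b \<le> a} b \<le> exp (t * a) * (\<Prod>v\<in>B. if b v then exp (- t) else 1)"
    proof (cases "?H b \<le> a")
      case True
      then have "0 \<le> t * (a - ?H b)" using t by simp
      then have "1 \<le> exp (t * (a - ?H b))" by simp
      then show ?thesis using True e by simp
    next
      case False then show ?thesis using e by simp
    qed
  qed
  also have "\<dots> = exp (t * a) * (1 - q + q * exp (- t)) ^ card B"
    using exp_prod_bern[OF fA BA q, of "exp (- t)"] by simp
  also have "\<dots> \<le> exp (t * a) * exp (- q * (1 - exp (- t))) ^ card B"
  proof -
    have "0 \<le> 1 - q + q * exp (- t)" using q by (simp add: add_nonneg_nonneg)
    moreover have "1 - q + q * exp (- t) \<le> exp (- q * (1 - exp (- t)))"
      using exp_ge_add_one_self[of "- q * (1 - exp (- t))"] by (simp add: algebra_simps)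
    ultimately show ?thesis by (intro mult_left_mono power_mono) auto
  qed
  also have "\<dots> = exp (t * a - real (card B) * q * (1 - exp (- t)))"
    by (simp add: exp_of_nat_mult[symmetric] exp_add[symmetric] algebra_simps)
  finally show ?thesis .
qed

lemma prob_transfer:
  assumes j: "j \<noteq> 0"
  shows "measure_pmf.prob (placement_pmf s m P) {X. \<Phi> (\<lambda>v. stores m X v j)}
       = measure_pmf.prob (Pi_pmf (grid s) False (\<lambda>_. bernoulli_pmf (ptilde P m j))) {b. \<Phi> b}"
proof -
  have "Pi_pmf (grid s) False (\<lambda>_. bernoulli_pmf (ptilde P m j)) = map_pmf (\<lambda>X v. stores m X v j) (placement_pmf s m P)"
    unfolding placement_pmf_def using holders_dist[OF finite_grid j, where m=m and P=P] by simp
  then show ?thesis by simp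
qed

lemma sqrt_sq_div: "L \<ge> 0 \<Longrightarrow> q > 0 \<Longrightarrow> (sqrt (L / q))^2 * q = L"
  by simp

lemma bad_upper:
  assumes j: "j \<noteq> 0" and u: "u \<in> grid s" and q: "ptilde P m j > 0" and A: "A \<ge> 0"
    and k: "k = nat \<lceil>A * sqrt (real L / ptilde P m j)\<rceil>" and ks: "k \<le> s - 1"
  shows "measure_pmf.prob (placement_pmf s m P) {X. card {v\<in>ball_g s u (2 * k). stores m X v j} < L}
         \<le> exp (real L - A^2 / 2 * real L)"
proof -
  let ?q = "ptilde P m j"
  let ?S = "sqrt (real L / ?q)"
  let ?B = "ball_g s u (2 * k)"
  have q1: "0 \<le> ?q" "?q \<le> 1" by (rule ptilde_range)+
  have "measure_pmf.prob (placement_pmf s m P) {X. card {v\<in>?B. stores m X v j} < L}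
      = measure_pmf.prob (Pi_pmf (grid s) False (\<lambda>_. bernoulli_pmf ?q)) {b. card {v\<in>?B. b v} < L}"
    by (rule prob_transfer[OF j, where \<Phi>="\<lambda>b. card {v\<in>?B. b v} < L"])
  also have "\<dots> \<le> measure_pmf.prob (Pi_pmf (grid s) False (\<lambda>_. bernoulli_pmf ?q)) {b. real (card {v\<in>?B. b v}) \<le> real L}"
    by (intro measure_pmf.finite_measure_mono) auto
  also have "\<dots> \<le> exp (1 * real L - real (card ?B) * ?q * (1 - exp (- 1)))"
    by (intro chernoff_lower finite_grid ball_g_sub q1) auto
  also have "\<dots> \<le> exp (real L - A^2 / 2 * real L)"
  proof -
    have c1: "real ((k + 1)^2) \<le> real (card ?B)" using card_ball_lower[OF u ks] by linarith
    have c2: "A * ?S \<le> real k" using k by linarith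
    have c3: "0 \<le> A * ?S" using A q1 by (intro mult_nonneg_nonneg) auto
    have "(A * ?S)^2 \<le> (real k + 1)^2" using c2 c3 by (intro power_mono) auto
    then have N: "(A * ?S)^2 \<le> real (card ?B)" using c1 by (simp add: add.commute)
    have "(A * ?S)^2 * ?q = A^2 * real L"
      using q by (simp add: power_mult_distrib)
    then have "A^2 * real L \<le> real (card ?B) * ?q" using N q1 by (metis mult_right_mono)
    moreover have "exp (- 1) \<le> (1/2::real)"
    proof -
      have "2 \<le> exp (1::real)" using exp_ge_add_one_self[of 1] by simp
      then show ?thesis by (simp add: exp_minus field_simps)
    qed
    ultimately have "A^2 / 2 * real L \<le> real (card ?B) * ?q * (1 - exp (- 1))"
    proof -
      assume a: "A^2 * real L \<le> real (card ?B) * ?q" and b: "exp (- 1) \<le> (1/2::real)"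
      have "0 \<le> real (card ?B) * ?q" using q1 by simp
      then have "real (card ?B) * ?q * (1/2) \<le> real (card ?B) * ?q * (1 - exp (- 1))"
        using b by (intro mult_left_mono) auto
      then show ?thesis using a by linarith
    qed
    then show ?thesis by simp
  qed
  finally show ?thesis .
qed

lemma bad_lower:
  assumes j: "j \<noteq> 0" and q: "ptilde P m j > 0" and dl: "\<delta> \<ge> 0" and T: "T \<ge> 0"
    and t: "t = nat \<lfloor>\<delta> * sqrt (real L / ptilde P m j)\<rfloor>"
  shows "measure_pmf.prob (placement_pmf s m P) {X. real L / 2 \<le> real (card {v\<in>ball_g s u t. stores m X v j})}
         \<le> exp (- T * (real L / 2) + (8 * \<delta>^2 * real L + 2) * exp T)"
proof -
  let ?q = "ptilde P m j"
  let ?S = "sqrt (real L / ?q)"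
  let ?B = "ball_g s u t"
  have q1: "0 \<le> ?q" "?q \<le> 1" by (rule ptilde_range)+
  have "measure_pmf.prob (placement_pmf s m P) {X. real L / 2 \<le> real (card {v\<in>?B. stores m X v j})}
      = measure_pmf.prob (Pi_pmf (grid s) False (\<lambda>_. bernoulli_pmf ?q)) {b. real L / 2 \<le> real (card {v\<in>?B. b v})}"
    by (rule prob_transfer[OF j, where \<Phi>="\<lambda>b. real L / 2 \<le> real (card {v\<in>?B. b v})"])
  also have "\<dots> \<le> exp (- T * (real L / 2) + real (card ?B) * ?q * (exp T - 1))"
    by (intro chernoff_upper finite_grid ball_g_sub q1 T)
  also have "\<dots> \<le> exp (- T * (real L / 2) + (8 * \<delta>^2 * real L + 2) * exp T)"
  proof -
    have t0: "real t \<le> \<delta> * ?S"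
    proof -
      have "0 \<le> \<delta> * ?S" using dl q1 by (intro mult_nonneg_nonneg) auto
      then have "real t = of_int \<lfloor>\<delta> * ?S\<rfloor>" using t by simp
      then show ?thesis by simp
    qed
    have "real (card ?B) \<le> (2 * real t + 1)^2" using card_ball_upper[of s u t]
      by (metis (mono_tags, lifting) of_nat_1 of_nat_add of_nat_le_iff of_nat_mult of_nat_numeral of_nat_power)
    also have "\<dots> \<le> 8 * real t ^ 2 + 2"
    proof -
      have "0 \<le> (2 * real t - 1)^2" by simp
      then show ?thesis by (simp add: power2_eq_square algebra_simps)
    qed
    also have "\<dots> \<le> 8 * (\<delta> * ?S)^2 + 2" using t0 by (intro add_mono mult_left_mono power_mono) auto
    finally have N: "real (card ?B) \<le> 8 * (\<delta> * ?S)^2 + 2" .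
    have "real (card ?B) * ?q \<le> (8 * (\<delta> * ?S)^2 + 2) * ?q" using N q1 by (intro mult_right_mono) auto
    also have "\<dots> = 8 * \<delta>^2 * real L + 2 * ?q" using q by (simp add: power_mult_distrib algebra_simps)
    also have "\<dots> \<le> 8 * \<delta>^2 * real L + 2" using q1 by simp
    finally have Nq: "real (card ?B) * ?q \<le> 8 * \<delta>^2 * real L + 2" .
    have "real (card ?B) * ?q * (exp T - 1) \<le> (8 * \<delta>^2 * real L + 2) * (exp T - 1)"
      using Nq T by (intro mult_right_mono) auto
    also have "\<dots> \<le> (8 * \<delta>^2 * real L + 2) * exp T" by (intro mult_left_mono) auto
    finally show ?thesis by simp
  qed
  finally show ?thesis .
qed

lemma holders_ball: "{v\<in>holders s m X j. gdist u v \<le> t} = {v\<in>ball_g s u t. stores m X v j}"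
  unfolding holders_def ball_g_def by auto

lemma finite_holders: "finite (holders s m X j)" "holders s m X j \<subseteq> grid s"
  unfolding holders_def by auto

lemma per_s:
  fixes s m L K :: nat and P :: "nat pmf" and A \<delta> T :: real
  assumes s4: "s \<ge> 4" and L1: "L \<ge> 1" and supp: "set_pmf P \<subseteq> {1..K}"
    and qpos: "\<forall>j\<in>{1..K}. ptilde P m j > 0"
    and Sle: "\<forall>j\<in>{1..K}. A * sqrt (real L / ptilde P m j) \<le> real s / 2"
    and A1: "A \<ge> 1" and d0: "0 < \<delta>" and d1: "\<delta> \<le> 1" and T0: "T \<ge> 0"
  shows "measure_pmf.prob (placement_pmf s m P)
              {X. \<forall>u\<in>grid s. \<forall>j\<in>{1..K}.
                  \<delta> / 2 * sqrt (real L / ptilde P m j) \<le> req_cost s m L X u j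
                \<and> req_cost s m L X u j \<le> 4 * A * sqrt (real L / ptilde P m j)}
         \<ge> 1 - real (s^2) * real K * (exp (real L - A^2 / 2 * real L) + exp (- T * (real L / 2) + (8 * \<delta>^2 * real L + 2) * exp T))"
proof -
  let ?M = "placement_pmf s m P"
  define S where "S = (\<lambda>j. sqrt (real L / ptilde P m j))"
  define kk where "kk = (\<lambda>j. nat \<lceil>A * S j\<rceil>)"
  define tt where "tt = (\<lambda>j. nat \<lfloor>\<delta> * S j\<rfloor>)"
  define bad1 where "bad1 = (\<lambda>(u, j). {X. real L / 2 \<le> real (card {v\<in>ball_g s u (tt j). stores m X v j})})"
  define bad2 where "bad2 = (\<lambda>(u, j). {X. card {v\<in>ball_g s u (2 * kk j). stores m X v j} < L})"
  define E1 where "E1 = exp (- T * (real L / 2) + (8 * \<delta>^2 * real L + 2) * exp T)"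
  define E2 where "E2 = exp (real L - A^2 / 2 * real L)"
  define G where "G = {X. \<forall>u\<in>grid s. \<forall>j\<in>{1..K}.
                  \<delta> / 2 * sqrt (real L / ptilde P m j) \<le> req_cost s m L X u j
                \<and> req_cost s m L X u j \<le> 4 * A * sqrt (real L / ptilde P m j)}"
  have S1: "S j \<ge> 1" if "j \<in> {1..K}" for j
  proof -
    have "ptilde P m j \<le> 1" by (rule ptilde_range)
    then have "1 \<le> real L / ptilde P m j" using qpos that L1 by (simp add: le_divide_eq)
    then show ?thesis unfolding S_def by simp
  qed
  have good: "X \<in> G" if nb: "X \<notin> (\<Union>i\<in>grid s \<times> {1..K}. bad1 i \<union> bad2 i)" for X
    unfolding G_def mem_Collect_eq
  proof (intro ballI conjI)
    fix u j assume u: "u \<in> grid s" and j: "j \<in> {1..K}"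
    have nb1: "\<not> real L / 2 \<le> real (card {v\<in>ball_g s u (tt j). stores m X v j})"
      using nb u j unfolding bad1_def by auto
    have nb2: "\<not> card {v\<in>ball_g s u (2 * kk j). stores m X v j} < L"
      using nb u j unfolding bad2_def by auto
    have ASj: "A * S j \<le> real s / 2" using Sle j unfolding S_def by auto
    have Sj: "S j \<ge> 1" using S1 j by auto
    have "t_ok": "tt j + 1 \<le> 2 * (s - 1)"
    proof -
      have "\<delta> * S j \<le> A * S j" using d1 A1 Sj by (intro mult_right_mono) auto
      then have "real (tt j) \<le> real s / 2"
        unfolding tt_def using ASj d0 Sj
        by (metis (no_types, opaque_lifting) dual_order.trans floor_le_iff le_nat_floor mult_nonneg_nonneg
            less_imp_le of_nat_floor order.trans zero_le_one)
      then show ?thesis using s4 by linarith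
    qed
    have "2 * card {v\<in>holders s m X j. gdist u v \<le> tt j} \<le> L"
      using nb1 unfolding holders_ball by linarith
    then have "cst s L u (holders s m X j) \<ge> real (tt j + 1) / 2"
      by (intro cst_lower finite_holders L1 t_ok)
    moreover have "\<delta> * S j \<le> real (tt j + 1)"
    proof -
      have "0 \<le> \<delta> * S j" using d0 Sj by simp
      then have "real (tt j) = of_int \<lfloor>\<delta> * S j\<rfloor>" unfolding tt_def by simp
      then show ?thesis by linarith
    qed
    ultimately show "\<delta> / 2 * sqrt (real L / ptilde P m j) \<le> req_cost s m L X u j"
      unfolding req_cost_cst S_def by simp
    have "L \<le> card {v\<in>holders s m X j. gdist u v \<le> 2 * kk j}"
      using nb2 unfolding holders_ball by linarith
    then have "cst s L u (holders s m X j) \<le> real (2 * kk j)"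
      by (intro cst_upper finite_holders L1)
    moreover have "real (2 * kk j) \<le> 4 * A * S j"
    proof -
      have "0 \<le> A * S j" using A1 Sj by simp
      then have "real (kk j) = of_int \<lceil>A * S j\<rceil>" unfolding kk_def by simp
      then have "real (kk j) \<le> A * S j + 1" by linarith
      moreover have "1 \<le> A * S j" using A1 Sj by (metis mult_mono' mult_1 zero_le_one)
      ultimately show ?thesis by simp
    qed
    ultimately show "req_cost s m L X u j \<le> 4 * A * sqrt (real L / ptilde P m j)"
      unfolding req_cost_cst S_def by simp
  qed
  have pb: "measure_pmf.prob ?M (bad1 i \<union> bad2 i) \<le> E1 + E2" if i: "i \<in> grid s \<times> {1..K}" for i
  proof -
    obtain u j where uj: "i = (u, j)" by (cases i)
    have u: "u \<in> grid s" and j: "j \<in> {1..K}" using i uj by auto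
    have j0: "j \<noteq> 0" using j by auto
    have ks: "kk j \<le> s - 1"
    proof -
      have "0 \<le> A * S j" using A1 S1[OF j] by simp
      then have "real (kk j) = of_int \<lceil>A * S j\<rceil>" unfolding kk_def by simp
      then have "real (kk j) \<le> A * S j + 1" by linarith
      moreover have "A * S j \<le> real s / 2" using Sle j unfolding S_def by auto
      moreover have "real s \<ge> 4" using s4 by simp
      ultimately have "real (kk j) \<le> real (s - 1)" using s4 by (simp add: of_nat_diff)
      then show ?thesis by linarith
    qed
    have "measure_pmf.prob ?M (bad1 i \<union> bad2 i) \<le> measure_pmf.prob ?M (bad1 i) + measure_pmf.prob ?M (bad2 i)"
      by (rule measure_Un_le) auto
    also have "measure_pmf.prob ?M (bad1 i) \<le> E1"
    proof -
      have "bad1 i = {X. real L / 2 \<le> real (card {v\<in>ball_g s u (tt j). stores m X v j})}"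
        by (simp add: bad1_def uj)
      moreover have "measure_pmf.prob ?M {X. real L / 2 \<le> real (card {v\<in>ball_g s u (tt j). stores m X v j})} \<le> E1"
        unfolding E1_def using qpos j d0 T0
        by (intro bad_lower[OF j0]) (auto simp: tt_def S_def)
      ultimately show ?thesis by simp
    qed
    also have "measure_pmf.prob ?M (bad2 i) \<le> E2"
    proof -
      have "bad2 i = {X. card {v\<in>ball_g s u (2 * kk j). stores m X v j} < L}"
        by (simp add: bad2_def uj)
      moreover have "measure_pmf.prob ?M {X. card {v\<in>ball_g s u (2 * kk j). stores m X v j} < L} \<le> E2"
        unfolding E2_def using qpos j A1 ks
        by (intro bad_upper[OF j0 u]) (auto simp: kk_def S_def)
      ultimately show ?thesis by simp
    qed
    finally show ?thesis by simp
  qed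
  have "measure_pmf.prob ?M (\<Union>i\<in>grid s \<times> {1..K}. bad1 i \<union> bad2 i) \<le> (\<Sum>i\<in>grid s \<times> {1..K}. measure_pmf.prob ?M (bad1 i \<union> bad2 i))"
    by (rule measure_pmf.finite_measure_subadditive_finite) auto
  also have "\<dots> \<le> (\<Sum>i\<in>grid s \<times> {1..K}. E1 + E2)" by (intro sum_mono pb)
  also have "\<dots> = real (s^2) * real K * (E2 + E1)" by (simp add: card_cartesian_product)
  finally have U: "measure_pmf.prob ?M (\<Union>i\<in>grid s \<times> {1..K}. bad1 i \<union> bad2 i) \<le> real (s^2) * real K * (E2 + E1)" .
  have "1 - measure_pmf.prob ?M (\<Union>i\<in>grid s \<times> {1..K}. bad1 i \<union> bad2 i) \<le> measure_pmf.prob ?M G"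
  proof -
    have "measure_pmf.prob ?M (UNIV - G) \<le> measure_pmf.prob ?M (\<Union>i\<in>grid s \<times> {1..K}. bad1 i \<union> bad2 i)"
      using good by (intro measure_pmf.finite_measure_mono) auto
    moreover have "measure_pmf.prob ?M (UNIV - G) = 1 - measure_pmf.prob ?M G"
      using measure_pmf.prob_compl[of G ?M] by simp
    ultimately show ?thesis by simp
  qed
  then show ?thesis using U unfolding G_def E1_def E2_def by simp
qed

lemma fin_Pi_pmf:
  assumes "finite A" "\<And>x. x \<in> A \<Longrightarrow> finite (set_pmf (p x))"
  shows "finite (set_pmf (Pi_pmf A d p))"
proof -
  have "set_pmf (Pi_pmf A d p) \<subseteq> PiE_dflt A d (set_pmf \<circ> p)" by (rule set_Pi_pmf_subset'[OF assms(1)])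
  moreover have "finite (PiE_dflt A d (set_pmf \<circ> p))" using assms by (intro finite_PiE_dflt) auto
  ultimately show ?thesis by (rule finite_subset)
qed

lemma fin_PL: "finite (set_pmf P) \<Longrightarrow> finite (set_pmf (placement_pmf s m P))"
  unfolding placement_pmf_def by (intro fin_Pi_pmf) (auto simp: grid_def)

lemma grid_ne: "s \<ge> 1 \<Longrightarrow> grid s \<noteq> {}"
  unfolding grid_def by auto

lemma fin_RQ: "finite (set_pmf P) \<Longrightarrow> s \<ge> 1 \<Longrightarrow> finite (set_pmf (requests_pmf s P))"
  unfolding requests_pmf_def by (intro fin_Pi_pmf) (auto simp: grid_ne)

lemma req_supp:
  assumes "R \<in> set_pmf (requests_pmf s P)" "r < s^2" "s \<ge> 1"
  shows "fst (R r) \<in> grid s" "snd (R r) \<in> set_pmf P"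
proof -
  have "R \<in> PiE_dflt {0..<s^2} ((0, 0), 0) (set_pmf \<circ> (\<lambda>_. pair_pmf (pmf_of_set (grid s)) P))"
    using set_Pi_pmf_subset'[of "{0..<s^2}" "((0, 0), 0)" "\<lambda>_. pair_pmf (pmf_of_set (grid s)) P"] assms(1)
    unfolding requests_pmf_def by auto
  then have "R r \<in> grid s \<times> set_pmf P" using assms(2,3) grid_ne[of s] by (auto simp: PiE_dflt_def)
  then show "fst (R r) \<in> grid s" "snd (R r) \<in> set_pmf P" by auto
qed

lemma exp_h:
  fixes g :: "nat \<Rightarrow> real"
  assumes s: "s \<ge> 1" and fP: "finite (set_pmf P)"
  shows "measure_pmf.expectation (requests_pmf s P) (\<lambda>R. (\<Sum>r<s^2. g (snd (R r))) / real (s^2))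
       = measure_pmf.expectation P g"
proof -
  have int: "integrable (measure_pmf (requests_pmf s P)) f" for f :: "_ \<Rightarrow> real"
    by (intro integrable_measure_pmf_finite fin_RQ fP s)
  have comp: "measure_pmf.expectation (requests_pmf s P) (\<lambda>R. g (snd (R r))) = measure_pmf.expectation P g"
    if r: "r < s^2" for r
  proof -
    have mp: "map_pmf (\<lambda>R. R r) (requests_pmf s P) = pair_pmf (pmf_of_set (grid s)) P"
      unfolding requests_pmf_def using r by (subst Pi_pmf_component) auto
    have "measure_pmf.expectation (map_pmf (\<lambda>R. R r) (requests_pmf s P)) (\<lambda>x. g (snd x))
        = measure_pmf.expectation (requests_pmf s P) (\<lambda>R. g (snd (R r)))"
      by (rule integral_map_pmf)
    then have "measure_pmf.expectation (requests_pmf s P) (\<lambda>R. g (snd (R r)))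
        = measure_pmf.expectation (pair_pmf (pmf_of_set (grid s)) P) (\<lambda>x. g (snd x))"
      unfolding mp by simp
    also have "\<dots> = measure_pmf.expectation P g" by simp
    finally show ?thesis .
  qed
  have "measure_pmf.expectation (requests_pmf s P) (\<lambda>R. (\<Sum>r<s^2. g (snd (R r))) / real (s^2))
      = (\<Sum>r<s^2. measure_pmf.expectation (requests_pmf s P) (\<lambda>R. g (snd (R r)))) / real (s^2)"
    by (simp add: integral_sum int)
  also have "\<dots> = (\<Sum>r<s^2. measure_pmf.expectation P g) / real (s^2)"
    by (intro arg_cong[where f="\<lambda>x. x / real (s^2)"] sum.cong refl comp) auto
  also have "\<dots> = measure_pmf.expectation P g" using s by simp
  finally show ?thesis .
qed

lemma per_s_exp:
  fixes s m L K :: nat and P :: "nat pmf" and a1 a2 :: real and G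
  defines "S \<equiv> (\<lambda>j. sqrt (real L / ptilde P m j))"
  assumes s1: "s \<ge> 1" and L1: "L \<ge> 1" and supp: "set_pmf P \<subseteq> {1..K}" and a1: "a1 \<ge> 0" and a2: "a2 \<ge> 0"
    and SG: "\<forall>X\<in>G. \<forall>u\<in>grid s. \<forall>j\<in>{1..K}. a1 * S j \<le> req_cost s m L X u j \<and> req_cost s m L X u j \<le> a2 * S j"
    and Sle: "\<forall>j\<in>{1..K}. 0 \<le> S j \<and> S j \<le> real s"
  shows "a1 * (\<Sum>j=1..K. S j * pmf P j) - a1 * real s * (1 - measure_pmf.prob (placement_pmf s m P) G)
           \<le> measure_pmf.expectation (pair_pmf (placement_pmf s m P) (requests_pmf s P)) (\<lambda>(X, R). overall_cost s m L X R)"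
    and "measure_pmf.expectation (pair_pmf (placement_pmf s m P) (requests_pmf s P)) (\<lambda>(X, R). overall_cost s m L X R)
           \<le> a2 * (\<Sum>j=1..K. S j * pmf P j) + 2 * real s * (1 - measure_pmf.prob (placement_pmf s m P) G)"
proof -
  let ?PL = "placement_pmf s m P"
  let ?RQ = "requests_pmf s P"
  let ?PR = "pair_pmf ?PL ?RQ"
  let ?n = "s^2"
  define h where "h = (\<lambda>R :: nat \<Rightarrow> (nat \<times> nat) \<times> nat. (\<Sum>r<?n. S (snd (R r))) / real ?n)"
  define ib where "ib = (\<lambda>X :: (nat \<times> nat) \<times> nat \<Rightarrow> nat. indicator (- G) X :: real)"
  define F where "F = (\<lambda>(X, R). overall_cost s m L X R)"
  have fP: "finite (set_pmf P)" using supp finite_subset by blast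
  have finPR: "finite (set_pmf ?PR)" using fin_PL[OF fP] fin_RQ[OF fP s1] by simp
  have int: "integrable (measure_pmf ?PR) f" for f :: "_ \<Rightarrow> real"
    by (rule integrable_measure_pmf_finite[OF finPR])
  have ES: "measure_pmf.expectation P S = (\<Sum>j=1..K. S j * pmf P j)"
    by (rule integral_measure_pmf_real) (use supp in auto)
  have Eh: "measure_pmf.expectation ?PR (\<lambda>x. h (snd x)) = (\<Sum>j=1..K. S j * pmf P j)"
  proof -
    have "measure_pmf.expectation ?PR (\<lambda>x. h (snd x)) = measure_pmf.expectation ?RQ h"
      by (rule expectation_pair_pmf_snd)
    also have "\<dots> = measure_pmf.expectation P S" unfolding h_def by (rule exp_h[OF s1 fP])
    finally show ?thesis using ES by simp
  qed
  have Eib: "measure_pmf.expectation ?PR (\<lambda>x. ib (fst x)) = 1 - measure_pmf.prob ?PL G"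
  proof -
    have "measure_pmf.expectation ?PR (\<lambda>x. ib (fst x)) = measure_pmf.expectation ?PL ib" by simp
    also have "\<dots> = measure_pmf.prob ?PL (- G)" unfolding ib_def by simp
    also have "\<dots> = 1 - measure_pmf.prob ?PL G"
      using measure_pmf.prob_compl[of G ?PL] by (simp add: Compl_eq_Diff_UNIV)
    finally show ?thesis .
  qed
  have pw: "a1 * h R - a1 * real s * ib X \<le> F (X, R) \<and> F (X, R) \<le> a2 * h R + 2 * real s * ib X"
    if xr: "(X, R) \<in> set_pmf ?PR" for X R
  proof -
    have R: "R \<in> set_pmf ?RQ" using xr by simp
    have fu: "fst (R r) \<in> grid s" and sj: "snd (R r) \<in> {1..K}" if "r < ?n" for r
      using req_supp[OF R that s1] supp by auto
    have Fdef: "F (X, R) = (\<Sum>r<?n. req_cost s m L X (fst (R r)) (snd (R r))) / real ?n"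
      unfolding F_def overall_cost_def by simp
    have n0: "real ?n > 0" using s1 by simp
    have h0: "0 \<le> h R" unfolding h_def using Sle sj by (intro divide_nonneg_pos sum_nonneg n0) auto
    have hs: "h R \<le> real s"
    proof -
      have "(\<Sum>r<?n. S (snd (R r))) \<le> (\<Sum>r<?n. real s)" using Sle sj by (intro sum_mono) auto
      then show ?thesis unfolding h_def using n0 by (simp add: divide_le_eq mult.commute)
    qed
    show ?thesis
    proof (cases "X \<in> G")
      case True
      have ib0: "ib X = 0" unfolding ib_def using True by simp
      have "(\<Sum>r<?n. a1 * S (snd (R r))) \<le> (\<Sum>r<?n. req_cost s m L X (fst (R r)) (snd (R r)))"
        using SG True fu sj by (intro sum_mono) auto
      moreover have "(\<Sum>r<?n. req_cost s m L X (fst (R r)) (snd (R r))) \<le> (\<Sum>r<?n. a2 * S (snd (R r)))"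
        using SG True fu sj by (intro sum_mono) auto
      ultimately have "a1 * (\<Sum>r<?n. S (snd (R r))) / real ?n \<le> F (X, R) \<and> F (X, R) \<le> a2 * (\<Sum>r<?n. S (snd (R r))) / real ?n"
        unfolding Fdef using n0 by (simp add: divide_right_mono sum_distrib_left)
      then show ?thesis unfolding h_def ib0 by simp
    next
      case False
      have ib1: "ib X = 1" unfolding ib_def using False by simp
      have cb: "0 \<le> req_cost s m L X (fst (R r)) (snd (R r)) \<and> req_cost s m L X (fst (R r)) (snd (R r)) \<le> real (2 * (s - 1))"
        if "r < ?n" for r
        unfolding req_cost_cst using cst_bounded[OF finite_holders(1) finite_holders(2) fu[OF that] L1] by simp
      have "0 \<le> F (X, R)" unfolding Fdef using cb n0 by (intro divide_nonneg_pos sum_nonneg) auto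
      moreover have "F (X, R) \<le> real (2 * (s - 1))"
      proof -
        have "(\<Sum>r<?n. req_cost s m L X (fst (R r)) (snd (R r))) \<le> (\<Sum>r<?n. real (2 * (s - 1)))"
          using cb by (intro sum_mono) auto
        then show ?thesis unfolding Fdef using n0 by (simp add: divide_le_eq mult.commute)
      qed
      moreover have "a1 * h R \<le> a1 * real s" using hs a1 by (intro mult_left_mono) auto
      moreover have "0 \<le> a2 * h R" using a2 h0 by simp
      ultimately show ?thesis unfolding ib1 by auto
    qed
  qed
  have "measure_pmf.expectation ?PR (\<lambda>x. a1 * h (snd x) - a1 * real s * ib (fst x)) \<le> measure_pmf.expectation ?PR F"
    using pw by (intro integral_mono_AE int AE_pmfI) auto
  moreover have "measure_pmf.expectation ?PR (\<lambda>x. a1 * h (snd x) - a1 * real s * ib (fst x))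
      = a1 * measure_pmf.expectation ?PR (\<lambda>x. h (snd x)) - a1 * real s * measure_pmf.expectation ?PR (\<lambda>x. ib (fst x))"
    by (simp add: int)
  ultimately show "a1 * (\<Sum>j=1..K. S j * pmf P j) - a1 * real s * (1 - measure_pmf.prob ?PL G)
           \<le> measure_pmf.expectation ?PR (\<lambda>(X, R). overall_cost s m L X R)"
    unfolding Eh Eib F_def by simp
  have "measure_pmf.expectation ?PR F \<le> measure_pmf.expectation ?PR (\<lambda>x. a2 * h (snd x) + 2 * real s * ib (fst x))"
    using pw by (intro integral_mono_AE int AE_pmfI) auto
  moreover have "measure_pmf.expectation ?PR (\<lambda>x. a2 * h (snd x) + 2 * real s * ib (fst x))
      = a2 * measure_pmf.expectation ?PR (\<lambda>x. h (snd x)) + 2 * real s * measure_pmf.expectation ?PR (\<lambda>x. ib (fst x))"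
    by (simp add: int)
  ultimately show "measure_pmf.expectation ?PR (\<lambda>(X, R). overall_cost s m L X R)
           \<le> a2 * (\<Sum>j=1..K. S j * pmf P j) + 2 * real s * (1 - measure_pmf.prob ?PL G)"
    unfolding Eh Eib F_def by simp
qed

lemma arith_bound:
  fixes n Kr C D L A \<delta> T \<gamma> \<kappa> :: real
  assumes k0: "\<kappa> > 0" and n1: "n \<ge> 1" and Lk: "L \<ge> \<kappa> * ln n" and K0: "0 \<le> Kr" and KC: "Kr \<le> C * n"
    and nCD: "n \<ge> C * D" and C0: "C > 0"
    and gam: "\<gamma> = 4 / \<kappa>" and A2: "A^2 = 2 * \<gamma> + 2" and Td: "T = 2 * \<gamma> + 1"
    and d2: "\<delta>^2 = exp (- T) / 32" and Dd: "D = 1 + exp (2 * exp T)"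
  shows "n * Kr * (exp (L - A^2 / 2 * L) + exp (- T * (L / 2) + (8 * \<delta>^2 * L + 2) * exp T)) \<le> 1 / n"
proof -
  have gL: "\<gamma> * L \<ge> 4 * ln n"
  proof -
    have "\<gamma> * L \<ge> \<gamma> * (\<kappa> * ln n)" using Lk gam k0 by (intro mult_left_mono) auto
    also have "\<gamma> * (\<kappa> * ln n) = 4 * ln n" using gam k0 by simp
    finally show ?thesis .
  qed
  have "0 \<le> ln n" using n1 by simp
  then have "0 \<le> \<kappa> * ln n" using k0 by simp
  then have L0: "L \<ge> 0" using Lk by linarith
  have e4: "exp (- \<gamma> * L) \<le> 1 / n^4"
  proof -
    have "exp (- \<gamma> * L) \<le> exp (- (4 * ln n))" using gL by simp
    also have "exp (- (4 * ln n)) = 1 / n^4"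
    proof -
      have h: "ln (n^4) = 4 * ln n" using n1 by (simp add: ln_realpow)
      have "exp (4 * ln n) = exp (ln (n^4))" using h by simp
      also have "\<dots> = n^4" using n1 by simp
      finally show ?thesis by (simp add: exp_minus inverse_eq_divide)
    qed
    finally show ?thesis .
  qed
  have E2: "exp (L - A^2 / 2 * L) = exp (- \<gamma> * L)" using A2 by (simp add: algebra_simps)
  have E1: "exp (- T * (L / 2) + (8 * \<delta>^2 * L + 2) * exp T) \<le> exp (2 * exp T) * exp (- \<gamma> * L)"
  proof -
    have "8 * \<delta>^2 * exp T = 1/4" using d2 by (simp add: exp_minus field_simps)
    then have "- T * (L / 2) + (8 * \<delta>^2 * L + 2) * exp T = - \<gamma> * L - L / 4 + 2 * exp T"
      using Td by (simp add: algebra_simps)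
    then have "- T * (L / 2) + (8 * \<delta>^2 * L + 2) * exp T \<le> 2 * exp T + - \<gamma> * L" using L0 by linarith
    then have "exp (- T * (L / 2) + (8 * \<delta>^2 * L + 2) * exp T) \<le> exp (2 * exp T + - \<gamma> * L)"
      by (simp only: exp_le_cancel_iff)
    also have "exp (2 * exp T + - \<gamma> * L) = exp (2 * exp T) * exp (- \<gamma> * L)" by (rule exp_add)
    finally show ?thesis .
  qed
  have sum: "exp (L - A^2 / 2 * L) + exp (- T * (L / 2) + (8 * \<delta>^2 * L + 2) * exp T) \<le> D / n^4"
  proof -
    have "exp (L - A^2 / 2 * L) + exp (- T * (L / 2) + (8 * \<delta>^2 * L + 2) * exp T) \<le> D * exp (- \<gamma> * L)"
    proof -
      have "D * exp (- \<gamma> * L) = exp (- \<gamma> * L) + exp (2 * exp T) * exp (- \<gamma> * L)"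
        using Dd by (simp add: algebra_simps)
      then show ?thesis using E1 E2 by linarith
    qed
    also have "\<dots> \<le> D * (1 / n^4)" using e4 Dd by (intro mult_left_mono) auto
    finally show ?thesis by simp
  qed
  have "n * Kr * (exp (L - A^2 / 2 * L) + exp (- T * (L / 2) + (8 * \<delta>^2 * L + 2) * exp T)) \<le> n * (C * n) * (D / n^4)"
    using sum KC K0 n1 by (intro mult_mono mult_left_mono) (auto intro: add_nonneg_nonneg)
  also have "\<dots> = C * D / n^2"
  proof -
    have n4: "n^4 = n^2 * n^2" by (simp add: power_add[symmetric])
    have "n * (C * n) * (D / n^4) = C * D * (n^2 / (n^2 * n^2))"
      unfolding n4 by (simp add: power2_eq_square)
    also have "n^2 / (n^2 * n^2) = 1 / n^2" by (rule nonzero_divide_mult_cancel_left) (use n1 in simp)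
    finally show ?thesis by simp
  qed
  also have "\<dots> \<le> n / n^2" using nCD n1 by (intro divide_right_mono) auto
  also have "\<dots> = 1 / n" using n1 by (simp add: power2_eq_square)
  finally show ?thesis .
qed

lemma sum_ge1:
  fixes K :: nat and P :: "nat pmf"
  assumes supp: "set_pmf P \<subseteq> {1..K}" and S1: "\<forall>j\<in>{1..K}. S j \<ge> (1::real)"
  shows "(\<Sum>j=1..K. S j * pmf P j) \<ge> 1"
proof -
  have "measure_pmf.prob P (UNIV - {1..K}) = 0" using supp by (subst measure_pmf_zero_iff) auto
  then have "measure_pmf.prob P {1..K} = 1"
    using measure_pmf.prob_compl[of "{1..K}" P] by simp
  moreover have "measure_pmf.prob P {1..K} = sum (pmf P) {1..K}" by (rule measure_measure_pmf_finite) simp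
  ultimately have "(\<Sum>j=1..K. pmf P j) = 1" by simp
  moreover have "(\<Sum>j=1..K. pmf P j) \<le> (\<Sum>j=1..K. S j * pmf P j)"
    using S1 by (intro sum_mono) (simp add: mult_le_cancel_right1 pmf_nonneg)
  ultimately show ?thesis by simp
qed

theorem theorem3:
  fixes K l :: "nat \<Rightarrow> nat" and M :: "nat \<Rightarrow> real" and P :: "nat \<Rightarrow> nat pmf"
  assumes K_pos: "\<forall>s. K s \<ge> 1"
    and P_supp: "\<forall>s. set_pmf (P s) \<subseteq> {1..K s}"
    and K_bigO: "(\<lambda>s. real (K s)) \<in> O(\<lambda>s. real (s^2))"
    and l_pos: "\<forall>s. l s \<ge> 1"
    and l_Omega: "(\<lambda>s. real (l s)) \<in> \<Omega>(\<lambda>s. ln (real (s^2)))"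
    and M_cache: "\<forall>s. M s \<ge> 0 \<and> M s * real (l s) \<in> \<nat>"
    and pt_pos: "\<forall>s. \<forall>j\<in>{1..K s}. ptilde (P s) (nslots (M s) (l s)) j > 0"
    and small: "\<forall>\<epsilon>>0. \<forall>\<^sub>F s in sequentially. \<forall>j\<in>{1..K s}.
                  sqrt (real (l s) / ptilde (P s) (nslots (M s) (l s)) j) \<le> \<epsilon> * sqrt (real (s^2))"
  shows "(\<exists>c>0. \<exists>a1>0. \<exists>a2>0. \<forall>\<^sub>F s in sequentially.
            measure_pmf.prob (placement_pmf s (nslots (M s) (l s)) (P s))
              {X. \<forall>u\<in>grid s. \<forall>j\<in>{1..K s}.
                  a1 * sqrt (real (l s) / ptilde (P s) (nslots (M s) (l s)) j)
                    \<le> req_cost s (nslots (M s) (l s)) (l s) X u j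
                \<and> req_cost s (nslots (M s) (l s)) (l s) X u j
                    \<le> a2 * sqrt (real (l s) / ptilde (P s) (nslots (M s) (l s)) j)}
            \<ge> 1 - 1 / real (s^2) powr c)
       \<and> (\<exists>a1>0. \<exists>a2>0. \<forall>\<^sub>F s in sequentially.
            a1 * (\<Sum>j=1..K s. sqrt (real (l s) / ptilde (P s) (nslots (M s) (l s)) j) * pmf (P s) j)
              \<le> measure_pmf.expectation
                   (pair_pmf (placement_pmf s (nslots (M s) (l s)) (P s)) (requests_pmf s (P s)))
                   (\<lambda>(X, R). overall_cost s (nslots (M s) (l s)) (l s) X R)
          \<and> measure_pmf.expectation
                   (pair_pmf (placement_pmf s (nslots (M s) (l s)) (P s)) (requests_pmf s (P s)))
                   (\<lambda>(X, R). overall_cost s (nslots (M s) (l s)) (l s) X R)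
              \<le> a2 * (\<Sum>j=1..K s. sqrt (real (l s) / ptilde (P s) (nslots (M s) (l s)) j) * pmf (P s) j))"
proof -
  obtain \<kappa> where k0: "\<kappa> > 0" and evL: "\<forall>\<^sub>F s in sequentially. \<kappa> * norm (ln (real (s^2))) \<le> norm (real (l s))"
    using l_Omega unfolding bigomega_def by auto
  obtain C where C0: "C > 0" and evK: "\<forall>\<^sub>F s in sequentially. norm (real (K s)) \<le> C * norm (real (s^2))"
    using K_bigO unfolding bigo_def by auto
  define \<gamma> where "\<gamma> = 4 / \<kappa>"
  define A where "A = sqrt (2 * \<gamma> + 2)"
  define T where "T = 2 * \<gamma> + 1"
  define \<delta> where "\<delta> = sqrt (exp (- T) / 32)"
  define D where "D = 1 + exp (2 * exp T)"
  have g0: "\<gamma> \<ge> 0" unfolding \<gamma>_def using k0 by simp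
  have A2: "A^2 = 2 * \<gamma> + 2" unfolding A_def using g0 by simp
  have A1: "A \<ge> 1" unfolding A_def using g0 by simp
  have T0: "T \<ge> 0" unfolding T_def using g0 by simp
  have d0: "\<delta> > 0" unfolding \<delta>_def by simp
  have d2: "\<delta>^2 = exp (- T) / 32" unfolding \<delta>_def by simp
  have d1: "\<delta> \<le> 1"
  proof -
    have "exp (- T) \<le> 1" using T0 by simp
    then have "exp (- T) / 32 \<le> 1" by linarith
    then show ?thesis unfolding \<delta>_def by simp
  qed
  define m where "m = (\<lambda>s. nslots (M s) (l s))"
  define S where "S = (\<lambda>s j. sqrt (real (l s) / ptilde (P s) (m s) j))"
  define G where "G = (\<lambda>s. {X. \<forall>u\<in>grid s. \<forall>j\<in>{1..K s}.
                  \<delta> / 2 * sqrt (real (l s) / ptilde (P s) (m s) j) \<le> req_cost s (m s) (l s) X u j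
                \<and> req_cost s (m s) (l s) X u j \<le> 4 * A * sqrt (real (l s) / ptilde (P s) (m s) j)})"
  have evS: "\<forall>\<^sub>F s in sequentially. \<forall>j\<in>{1..K s}. S s j \<le> 1 / (2 * A) * sqrt (real (s^2))"
  proof -
    have e: "1 / (2 * A) > 0" using A1 by simp
    show ?thesis using small[rule_format, OF e] by (simp only: S_def m_def)
  qed
  have evN: "\<forall>\<^sub>F s in sequentially. s \<ge> max 4 (nat \<lceil>C * D\<rceil>)"
    by (rule eventually_ge_at_top)
  have ev: "\<forall>\<^sub>F s in sequentially. measure_pmf.prob (placement_pmf s (m s) (P s)) (G s) \<ge> 1 - 1 / real (s^2)
      \<and> s \<ge> 4 \<and> (\<forall>j\<in>{1..K s}. 1 \<le> S s j \<and> S s j \<le> real s)"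
    using evL evK evS evN
  proof (eventually_elim)
    case (elim s)
    have s4: "s \<ge> 4" using elim(4) by simp
    have n1: "real (s^2) \<ge> 1" using s4 by simp
    have sq: "sqrt (real (s^2)) = real s" by simp
    have lnn: "0 \<le> ln (real (s^2))" using n1 by simp
    have Lk: "real (l s) \<ge> \<kappa> * ln (real (s^2))" using elim(1) lnn by simp
    have KC: "real (K s) \<le> C * real (s^2)" using elim(2) by simp
    have nCD: "real (s^2) \<ge> C * D"
    proof -
      have "C * D \<le> real (nat \<lceil>C * D\<rceil>)" by linarith
      also have "\<dots> \<le> real s" using elim(4) by simp
      also have "\<dots> \<le> real (s^2)" using s4 by (simp add: power2_eq_square)
      finally show ?thesis .
    qed
    have S1: "1 \<le> S s j" if j: "j \<in> {1..K s}" for j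
    proof -
      have "ptilde (P s) (m s) j \<le> 1" by (rule ptilde_range)
      moreover have "ptilde (P s) (m s) j > 0" using pt_pos j unfolding m_def by auto
      moreover have "real (l s) \<ge> 1" using l_pos by simp
      ultimately have "1 \<le> real (l s) / ptilde (P s) (m s) j" by (simp add: le_divide_eq)
      then show ?thesis unfolding S_def by simp
    qed
    have AS: "A * S s j \<le> real s / 2" if j: "j \<in> {1..K s}" for j
    proof -
      have "S s j \<le> 1 / (2 * A) * real s" using elim(3) j sq by auto
      then have "A * S s j \<le> A * (1 / (2 * A) * real s)" using A1 by (intro mult_left_mono) auto
      also have "\<dots> = real s / 2" using A1 by simp
      finally show ?thesis .
    qed
    have Ss: "S s j \<le> real s" if j: "j \<in> {1..K s}" for j
    proof -
      have "S s j \<le> A * S s j" using A1 S1[OF j] by simp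
      also have "\<dots> \<le> real s / 2" by (rule AS[OF j])
      finally show ?thesis by simp
    qed
    have "measure_pmf.prob (placement_pmf s (m s) (P s)) (G s)
        \<ge> 1 - real (s^2) * real (K s) * (exp (real (l s) - A^2 / 2 * real (l s)) + exp (- T * (real (l s) / 2) + (8 * \<delta>^2 * real (l s) + 2) * exp T))"
      unfolding G_def
      by (rule per_s[OF s4 _ _ _ _ A1 d0 d1 T0]) (use l_pos P_supp pt_pos AS in \<open>auto simp: m_def S_def\<close>)
    moreover have "real (s^2) * real (K s) * (exp (real (l s) - A^2 / 2 * real (l s)) + exp (- T * (real (l s) / 2) + (8 * \<delta>^2 * real (l s) + 2) * exp T))
        \<le> 1 / real (s^2)"
      by (rule arith_bound[OF k0 n1 Lk _ KC nCD C0 \<gamma>_def A2 T_def d2 D_def]) simp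
    ultimately show ?case using s4 S1 Ss by auto
  qed
  show ?thesis
  proof (intro conjI)
    show "\<exists>c>0. \<exists>a1>0. \<exists>a2>0. \<forall>\<^sub>F s in sequentially.
            measure_pmf.prob (placement_pmf s (nslots (M s) (l s)) (P s))
              {X. \<forall>u\<in>grid s. \<forall>j\<in>{1..K s}.
                  a1 * sqrt (real (l s) / ptilde (P s) (nslots (M s) (l s)) j)
                    \<le> req_cost s (nslots (M s) (l s)) (l s) X u j
                \<and> req_cost s (nslots (M s) (l s)) (l s) X u j
                    \<le> a2 * sqrt (real (l s) / ptilde (P s) (nslots (M s) (l s)) j)}
            \<ge> 1 - 1 / real (s^2) powr c"
    proof -
      have H: "\<forall>\<^sub>F s in sequentially.
            measure_pmf.prob (placement_pmf s (nslots (M s) (l s)) (P s))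
              {X. \<forall>u\<in>grid s. \<forall>j\<in>{1..K s}.
                  \<delta> / 2 * sqrt (real (l s) / ptilde (P s) (nslots (M s) (l s)) j)
                    \<le> req_cost s (nslots (M s) (l s)) (l s) X u j
                \<and> req_cost s (nslots (M s) (l s)) (l s) X u j
                    \<le> 4 * A * sqrt (real (l s) / ptilde (P s) (nslots (M s) (l s)) j)}
            \<ge> 1 - 1 / real (s^2) powr 1"
        using ev by eventually_elim (simp add: G_def m_def)
      have "(1::real) > 0" "\<delta> / 2 > 0" "4 * A > 0" using d0 A1 by auto
      then show ?thesis using H by blast
    qed
    show "\<exists>a1>0. \<exists>a2>0. \<forall>\<^sub>F s in sequentially.
            a1 * (\<Sum>j=1..K s. sqrt (real (l s) / ptilde (P s) (nslots (M s) (l s)) j) * pmf (P s) j)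
              \<le> measure_pmf.expectation
                   (pair_pmf (placement_pmf s (nslots (M s) (l s)) (P s)) (requests_pmf s (P s)))
                   (\<lambda>(X, R). overall_cost s (nslots (M s) (l s)) (l s) X R)
          \<and> measure_pmf.expectation
                   (pair_pmf (placement_pmf s (nslots (M s) (l s)) (P s)) (requests_pmf s (P s)))
                   (\<lambda>(X, R). overall_cost s (nslots (M s) (l s)) (l s) X R)
              \<le> a2 * (\<Sum>j=1..K s. sqrt (real (l s) / ptilde (P s) (nslots (M s) (l s)) j) * pmf (P s) j)"
    proof -
      have H: "\<forall>\<^sub>F s in sequentially.
            \<delta> / 4 * (\<Sum>j=1..K s. sqrt (real (l s) / ptilde (P s) (nslots (M s) (l s)) j) * pmf (P s) j)
              \<le> measure_pmf.expectation
                   (pair_pmf (placement_pmf s (nslots (M s) (l s)) (P s)) (requests_pmf s (P s)))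
                   (\<lambda>(X, R). overall_cost s (nslots (M s) (l s)) (l s) X R)
          \<and> measure_pmf.expectation
                   (pair_pmf (placement_pmf s (nslots (M s) (l s)) (P s)) (requests_pmf s (P s)))
                   (\<lambda>(X, R). overall_cost s (nslots (M s) (l s)) (l s) X R)
              \<le> (4 * A + 1) * (\<Sum>j=1..K s. sqrt (real (l s) / ptilde (P s) (nslots (M s) (l s)) j) * pmf (P s) j)"
        using ev
      proof eventually_elim
        case (elim s)
        have s4: "s \<ge> 4" using elim by simp
        define E where "E = measure_pmf.expectation (pair_pmf (placement_pmf s (m s) (P s)) (requests_pmf s (P s)))
                   (\<lambda>(X, R). overall_cost s (m s) (l s) X R)"
        define \<Sigma> where "\<Sigma> = (\<Sum>j=1..K s. S s j * pmf (P s) j)"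
        define \<beta> where "\<beta> = 1 - measure_pmf.prob (placement_pmf s (m s) (P s)) (G s)"
        have b1: "\<beta> \<le> 1 / real (s^2)" using elim unfolding \<beta>_def by simp
        have b0: "0 \<le> \<beta>" unfolding \<beta>_def by simp
        have Sg1: "\<Sigma> \<ge> 1" unfolding \<Sigma>_def using elim P_supp by (intro sum_ge1) auto
        have SG: "\<forall>X\<in>G s. \<forall>u\<in>grid s. \<forall>j\<in>{1..K s}. \<delta> / 2 * S s j \<le> req_cost s (m s) (l s) X u j
                      \<and> req_cost s (m s) (l s) X u j \<le> 4 * A * S s j"
          unfolding G_def S_def by auto
        have Sle: "\<forall>j\<in>{1..K s}. 0 \<le> S s j \<and> S s j \<le> real s" using elim by auto
        have lo: "\<delta> / 2 * \<Sigma> - \<delta> / 2 * real s * \<beta> \<le> E"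
          unfolding E_def \<Sigma>_def \<beta>_def S_def
          by (rule per_s_exp(1)[where G="G s" and ?a1.0="\<delta> / 2" and ?a2.0="4 * A"]) (use s4 l_pos P_supp d0 A1 SG Sle in \<open>auto simp: S_def\<close>)
        have up: "E \<le> 4 * A * \<Sigma> + 2 * real s * \<beta>"
          unfolding E_def \<Sigma>_def \<beta>_def S_def
          by (rule per_s_exp(2)[where G="G s" and ?a1.0="\<delta> / 2" and ?a2.0="4 * A"]) (use s4 l_pos P_supp d0 A1 SG Sle in \<open>auto simp: S_def\<close>)
        have sb: "real s * \<beta> \<le> 1 / 4"
        proof -
          have "real s * \<beta> \<le> real s * (1 / real (s^2))" using b1 by (intro mult_left_mono) auto
          also have "\<dots> = 1 / real s" using s4 by (simp add: power2_eq_square)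
          also have "\<dots> \<le> 1 / 4" using s4 by (simp add: divide_le_eq)
          finally show ?thesis .
        qed
        have "\<delta> / 4 * \<Sigma> \<le> E"
        proof -
          have "\<delta> / 2 * (real s * \<beta>) \<le> \<delta> / 2 * (1/4)" using sb d0 by (intro mult_left_mono) auto
          then have "\<delta> / 2 * real s * \<beta> \<le> \<delta> / 2 * (1/4)" by (simp add: mult.assoc)
          also have "\<dots> \<le> \<delta> / 4 * \<Sigma>" using Sg1 d0 by simp
          finally have "\<delta> / 2 * real s * \<beta> \<le> \<delta> / 4 * \<Sigma>" .
          then show ?thesis using lo by linarith
        qed
        moreover have "E \<le> (4 * A + 1) * \<Sigma>"
        proof -
          have "2 * real s * \<beta> \<le> 1" using sb by simp
          then show ?thesis using up Sg1 by (simp add: algebra_simps)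
        qed
        ultimately show ?case unfolding E_def \<Sigma>_def S_def m_def by simp
      qed
      have "\<delta> / 4 > 0" "4 * A + 1 > 0" using d0 A1 by auto
      then show ?thesis using H by blast
    qed
  qed
qed

end
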